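(* Let $\{c_k\}_{k\ge1}$ be i.i.d. random variables whose common distribution is absolutely continuous on $[0,1]$ with almost everywhere positive and uniformly bounded density, let $\lambda>0$ and $l_k=e^{-\lambda k}$, and let $q(n)=\lfloor\log_2(\log n)\rfloor$. Then almost surely the following holds: for every $\varepsilon>0$ there exists $\delta>0$ such that for all sufficiently large $n$ and all $n',n''\in\{n,2n,\dots,2^{q(n)}n\}$, $$\frac{1}{\#(\mathcal{A}_{n'}\times\mathcal{A}_{n''})}\sum_{\substack{i\in\mathcal{A}_{n'},\,j\in\mathcal{A}_{n''}\\ i\ne j,\ |c_i-c_j|<\delta}}(-\log|c_i-c_j|)<\varepsilon.$$
   Context: $\mathcal{A}_n=\{n,\dots,2n-1\}$. *)

theory Defs
  imports "HOL-Probability.Probability"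
begin

definition blockA :: "nat \<Rightarrow> nat set" where
  "blockA n = {n..<2*n}"

definition qfun :: "nat \<Rightarrow> int" where
  "qfun n = \<lfloor>log 2 (ln (real n))\<rfloor>"

definition scales :: "nat \<Rightarrow> nat set" where
  "scales n = {2^t * n | t. int t \<le> qfun n}"

end

theory Submission
  imports Defs
begin

definition gd :: "real \<Rightarrow> real \<Rightarrow> real" where
  "gd \<delta> t = (if \<bar>t\<bar> < \<delta> then - ln \<bar>t\<bar> else 0)"

definition hfun :: "real \<Rightarrow> real \<Rightarrow> real" where
  "hfun a t = (if t \<noteq> 0 \<and> \<bar>t\<bar> < a then \<bar>t\<bar> powr (-1/2) else 0)"

lemma gd_meas[measurable]: "gd \<delta> \<in> borel_measurable borel"
  unfolding gd_def by measurable

lemma hfun_meas[measurable]: "hfun a \<in> borel_measurable borel"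
  unfolding hfun_def by measurable

lemma half_int:
  assumes "0 < a"
  shows "(\<integral>\<^sup>+t. ennreal (indicator {0..a} t * t powr (-1/2)) \<partial>lborel) = ennreal (2 * sqrt a)"
proof -
  have "((\<lambda>x. x powr (-1/2)) has_integral (a powr (-1/2+1) / (-1/2+1))) {0..a}"
    by (rule has_integral_powr_from_0) (use assms in auto)
  moreover have "a powr (-1/2+1) / (-1/2+1) = 2 * sqrt a"
    using assms by (simp add: powr_half_sqrt)
  ultimately have "((\<lambda>x. x powr (-1/2)) has_integral (2 * sqrt a)) {0..a}" by (simp add: mult.commute)
  then have "((\<lambda>x. if x \<in> {0..a} then x powr (-1/2) else 0) has_integral (2 * sqrt a)) UNIV"
    by (subst has_integral_restrict_UNIV)
  moreover have "(\<lambda>x. if x \<in> {0..a} then x powr (-1/2) else 0) = (\<lambda>t. indicator {0..a} t * t powr (-1/2))"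
    by (auto simp: indicator_def fun_eq_iff)
  ultimately have hi: "((\<lambda>t. indicator {0..a} t * t powr (-1/2)) has_integral (2 * sqrt a)) UNIV" by simp
  show ?thesis
    by (rule nn_integral_has_integral_lborel[OF _ _ hi]) (auto simp: indicator_def)
qed

lemma hfun_int:
  assumes "0 < a"
  shows "(\<integral>\<^sup>+t. ennreal (hfun a t) \<partial>lborel) \<le> ennreal (4 * sqrt a)"
proof -
  define F where "F t = ennreal (indicator {0..a} t * t powr (-1/2))" for t
  have Fm[measurable]: "F \<in> borel_measurable borel" unfolding F_def by measurable
  have "(\<integral>\<^sup>+t. ennreal (hfun a t) \<partial>lborel) \<le> (\<integral>\<^sup>+t. F t + F (0 + (-1) * t) \<partial>lborel)"
  proof (rule nn_integral_mono)
    fix t :: real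
    show "ennreal (hfun a t) \<le> F t + F (0 + (-1) * t)"
      unfolding F_def hfun_def by (cases "t < 0") (auto simp: indicator_def)
  qed
  also have "\<dots> = (\<integral>\<^sup>+t. F t \<partial>lborel) + (\<integral>\<^sup>+t. F (0 + (-1) * t) \<partial>lborel)"
    by (rule nn_integral_add) auto
  also have "(\<integral>\<^sup>+t. F (0 + (-1) * t) \<partial>lborel) = (\<integral>\<^sup>+t. F t \<partial>lborel)"
    using nn_integral_real_affine[OF Fm, of "-1" 0] by simp
  also have "(\<integral>\<^sup>+t. F t \<partial>lborel) = ennreal (2 * sqrt a)"
    unfolding F_def by (rule half_int[OF assms])
  also have "ennreal (2 * sqrt a) + ennreal (2 * sqrt a) = ennreal (4 * sqrt a)"
    by (subst ennreal_plus[symmetric]) (use assms in auto)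
  finally show ?thesis .
qed

lemma mln_le: "0 < (y::real) \<Longrightarrow> 0 < a \<Longrightarrow> - ln y \<le> (1/a) * y powr (-a)"
proof -
  assume y: "0 < y" and a: "0 < a"
  have p: "0 < y powr (-a)" using y by simp
  have "ln (y powr (-a)) \<le> y powr (-a) - 1"
    by (rule ln_le_minus_one[OF p])
  moreover have "ln (y powr (-a)) = (-a) * ln y" using y by (auto intro: ln_powr)
  ultimately have "a * (- ln y) \<le> y powr (-a)" by linarith
  then show ?thesis using a by (simp add: field_simps)
qed

lemma gd_nonneg: "\<delta> \<le> 1 \<Longrightarrow> 0 \<le> gd \<delta> t"
proof (cases "t = 0")
  case False
  assume "\<delta> \<le> 1"
  then show ?thesis using False ln_le_minus_one[of "\<bar>t\<bar>"] unfolding gd_def by auto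
qed (simp add: gd_def)

lemma gd_le: "\<delta> \<le> 1 \<Longrightarrow> gd \<delta> t \<le> 2 * hfun \<delta> t"
proof -
  assume d: "\<delta> \<le> 1"
  show ?thesis
  proof (cases "t \<noteq> 0 \<and> \<bar>t\<bar> < \<delta>")
    case True
    then have tp: "0 < \<bar>t\<bar>" by auto
    have "- ln \<bar>t\<bar> \<le> (1/(1/2)) * \<bar>t\<bar> powr (-(1/2))" by (rule mln_le) (use tp in auto)
    then show ?thesis using True unfolding gd_def hfun_def by auto
  next
    case False
    then show ?thesis unfolding gd_def hfun_def by auto
  qed
qed

lemma gd_sq_le: "\<delta> \<le> 1 \<Longrightarrow> (gd \<delta> t)\<^sup>2 \<le> 16 * hfun 1 t"
proof -
  assume d: "\<delta> \<le> 1"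
  show ?thesis
  proof (cases "t \<noteq> 0 \<and> \<bar>t\<bar> < \<delta>")
    case True
    then have tp: "0 < \<bar>t\<bar>" "\<bar>t\<bar> < 1" using d by auto
    have nn: "0 \<le> - ln \<bar>t\<bar>" using ln_le_minus_one[of "\<bar>t\<bar>"] tp by auto
    have "- ln \<bar>t\<bar> \<le> (1/(1/4)) * \<bar>t\<bar> powr (-(1/4))" by (rule mln_le) (use tp in auto)
    then have "(- ln \<bar>t\<bar>)\<^sup>2 \<le> (4 * \<bar>t\<bar> powr (-(1/4)))\<^sup>2"
      using nn by (intro power_mono) auto
    also have "(4 * \<bar>t\<bar> powr (-(1/4)))\<^sup>2 = 16 * (\<bar>t\<bar> powr (-(1/4)) * \<bar>t\<bar> powr (-(1/4)))"
      by (simp add: power2_eq_square)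
    also have "\<bar>t\<bar> powr (-(1/4)) * \<bar>t\<bar> powr (-(1/4)) = \<bar>t\<bar> powr (-(1/4) + -(1/4))"
      by (rule powr_add[symmetric])
    finally have "(- ln \<bar>t\<bar>)\<^sup>2 \<le> 16 * \<bar>t\<bar> powr (-1/2)" by simp
    then show ?thesis using True tp unfolding gd_def hfun_def by auto
  next
    case False
    then show ?thesis unfolding gd_def hfun_def by (auto simp: not_less)
  qed
qed



lemma abs_mult_le_sq: "\<bar>(a::real) * b\<bar> \<le> a\<^sup>2 + b\<^sup>2"
proof -
  have "2 * \<bar>a\<bar> * \<bar>b\<bar> \<le> \<bar>a\<bar>\<^sup>2 + \<bar>b\<bar>\<^sup>2" by (rule sum_squares_bound)
  then have "2 * (\<bar>a\<bar> * \<bar>b\<bar>) \<le> a\<^sup>2 + b\<^sup>2" by (simp add: mult.assoc)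
  moreover have "0 \<le> \<bar>a\<bar> * \<bar>b\<bar>" by simp
  ultimately show ?thesis unfolding abs_mult by linarith
qed

lemma mult_le_half_sq: "(a::real) * b \<le> (a\<^sup>2 + b\<^sup>2) / 2"
  using sum_squares_bound[of a b] by simp


lemma (in prob_space) sq_sum_integrable:
  fixes Y :: "'i \<Rightarrow> 'a \<Rightarrow> real"
  assumes fin: "finite P" and meas: "\<And>p. p \<in> P \<Longrightarrow> Y p \<in> borel_measurable M"
    and sq: "\<And>p. p \<in> P \<Longrightarrow> integrable M (\<lambda>\<omega>. (Y p \<omega>)\<^sup>2)"
  shows "integrable M (\<lambda>\<omega>. (\<Sum>p\<in>P. Y p \<omega>)\<^sup>2)"
proof -
  have pint: "integrable M (\<lambda>\<omega>. Y p \<omega> * Y q \<omega>)" if "p \<in> P" "q \<in> P" for p q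
  proof (rule Bochner_Integration.integrable_bound[where f="\<lambda>\<omega>. (Y p \<omega>)\<^sup>2 + (Y q \<omega>)\<^sup>2"])
    show "integrable M (\<lambda>\<omega>. (Y p \<omega>)\<^sup>2 + (Y q \<omega>)\<^sup>2)" using sq that by auto
    show "(\<lambda>\<omega>. Y p \<omega> * Y q \<omega>) \<in> borel_measurable M" using meas that by auto
    show "AE x in M. norm (Y p x * Y q x) \<le> norm ((Y p x)\<^sup>2 + (Y q x)\<^sup>2)"
      using abs_mult_le_sq by auto
  qed
  have "(\<lambda>\<omega>. (\<Sum>p\<in>P. Y p \<omega>)\<^sup>2) = (\<lambda>\<omega>. \<Sum>p\<in>P. \<Sum>q\<in>P. Y p \<omega> * Y q \<omega>)"
    by (simp add: power2_eq_square sum_product)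
  then show ?thesis
    using pint by (simp add: Bochner_Integration.integrable_sum)
qed

lemma (in prob_space) var_sum_bound:
  fixes Y :: "'i \<Rightarrow> 'a \<Rightarrow> real"
  assumes fin: "finite P" and meas: "\<And>p. p \<in> P \<Longrightarrow> Y p \<in> borel_measurable M"
    and sq: "\<And>p. p \<in> P \<Longrightarrow> integrable M (\<lambda>\<omega>. (Y p \<omega>)\<^sup>2)"
    and zero: "\<And>p q. p \<in> P \<Longrightarrow> q \<in> P \<Longrightarrow> \<not> R p q \<Longrightarrow> expectation (\<lambda>\<omega>. Y p \<omega> * Y q \<omega>) = 0"
    and v: "\<And>p. p \<in> P \<Longrightarrow> expectation (\<lambda>\<omega>. (Y p \<omega>)\<^sup>2) \<le> v"
  shows "expectation (\<lambda>\<omega>. (\<Sum>p\<in>P. Y p \<omega>)\<^sup>2) \<le> (\<Sum>p\<in>P. real (card {q\<in>P. R p q})) * v"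
proof -
  have pint: "integrable M (\<lambda>\<omega>. Y p \<omega> * Y q \<omega>)" if "p \<in> P" "q \<in> P" for p q
  proof (rule Bochner_Integration.integrable_bound[where f="\<lambda>\<omega>. (Y p \<omega>)\<^sup>2 + (Y q \<omega>)\<^sup>2"])
    show "integrable M (\<lambda>\<omega>. (Y p \<omega>)\<^sup>2 + (Y q \<omega>)\<^sup>2)" using sq that by auto
    show "(\<lambda>\<omega>. Y p \<omega> * Y q \<omega>) \<in> borel_measurable M" using meas that by auto
    show "AE x in M. norm (Y p x * Y q x) \<le> norm ((Y p x)\<^sup>2 + (Y q x)\<^sup>2)"
      using abs_mult_le_sq by auto
  qed
  have le: "expectation (\<lambda>\<omega>. Y p \<omega> * Y q \<omega>) \<le> v" if "p \<in> P" "q \<in> P" for p q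
  proof -
    have "expectation (\<lambda>\<omega>. Y p \<omega> * Y q \<omega>) \<le> expectation (\<lambda>\<omega>. ((Y p \<omega>)\<^sup>2 + (Y q \<omega>)\<^sup>2) / 2)"
      by (rule integral_mono) (use pint sq that mult_le_half_sq in auto)
    also have "\<dots> = (expectation (\<lambda>\<omega>. (Y p \<omega>)\<^sup>2) + expectation (\<lambda>\<omega>. (Y q \<omega>)\<^sup>2)) / 2"
      using sq that by simp
    also have "\<dots> \<le> v" using v[OF that(1)] v[OF that(2)] by simp
    finally show ?thesis .
  qed
  have "(\<lambda>\<omega>. (\<Sum>p\<in>P. Y p \<omega>)\<^sup>2) = (\<lambda>\<omega>. \<Sum>p\<in>P. \<Sum>q\<in>P. Y p \<omega> * Y q \<omega>)"
    by (simp add: power2_eq_square sum_product)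
  then have "expectation (\<lambda>\<omega>. (\<Sum>p\<in>P. Y p \<omega>)\<^sup>2) = (\<Sum>p\<in>P. \<Sum>q\<in>P. expectation (\<lambda>\<omega>. Y p \<omega> * Y q \<omega>))"
    using pint by (simp add: Bochner_Integration.integral_sum Bochner_Integration.integrable_sum)
  also have "\<dots> \<le> (\<Sum>p\<in>P. real (card {q\<in>P. R p q}) * v)"
  proof (rule sum_mono)
    fix p assume p: "p \<in> P"
    have "(\<Sum>q\<in>P. expectation (\<lambda>\<omega>. Y p \<omega> * Y q \<omega>)) =
          (\<Sum>q\<in>P. if R p q then expectation (\<lambda>\<omega>. Y p \<omega> * Y q \<omega>) else 0)"
      by (rule sum.cong) (use zero p in auto)
    also have "\<dots> = (\<Sum>q\<in>{q\<in>P. R p q}. expectation (\<lambda>\<omega>. Y p \<omega> * Y q \<omega>))"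
      by (rule sum.inter_filter[symmetric]) (rule fin)
    also have "\<dots> \<le> (\<Sum>q\<in>{q\<in>P. R p q}. v)"
      by (rule sum_mono) (use le p in auto)
    also have "\<dots> = real (card {q\<in>P. R p q}) * v" by simp
    finally show "(\<Sum>q\<in>P. expectation (\<lambda>\<omega>. Y p \<omega> * Y q \<omega>)) \<le> real (card {q\<in>P. R p q}) * v" .
  qed
  also have "\<dots> = (\<Sum>p\<in>P. real (card {q\<in>P. R p q})) * v" by (simp add: sum_distrib_right)
  finally show ?thesis .
qed

locale Lset = prob_space M for M :: "'a measure" +
  fixes c :: "nat \<Rightarrow> 'a \<Rightarrow> real" and f :: "real \<Rightarrow> real" and B :: real
  assumes indep: "indep_vars (\<lambda>_. borel) c {1..}"
    and distr: "\<And>k. k \<ge> 1 \<Longrightarrow> distributed M lborel (c k) (\<lambda>x. ennreal (f x))"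
    and fmeas: "f \<in> borel_measurable lborel"
    and fnn: "\<And>x. 0 \<le> f x" and fB: "\<And>x. f x \<le> B" and Bpos: "0 < B"
begin

lemma fmeas_b[measurable]: "f \<in> borel_measurable borel"
  using fmeas by simp

lemma c_meas: "k \<ge> 1 \<Longrightarrow> c k \<in> borel_measurable M"
  using indep by (auto simp: indep_vars_def)

lemma distr_c: "k \<ge> 1 \<Longrightarrow> distr M borel (c k) = density lborel f"
proof -
  assume k: "k \<ge> 1"
  have "distr M borel (c k) = distr M lborel (c k)" by (rule distr_cong) auto
  also have "\<dots> = density lborel f" using distributed_distr_eq_density[OF distr[OF k]] by simp
  finally show ?thesis .
qed

lemma indep2: "i \<ge> 1 \<Longrightarrow> j \<ge> 1 \<Longrightarrow> i \<noteq> j \<Longrightarrow> indep_var borel (c i) borel (c j)"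
proof -
  assume ij: "i \<ge> 1" "j \<ge> 1" "i \<noteq> j"
  have "indep_var (PiM {i} (\<lambda>_. borel)) (\<lambda>\<omega>. restrict (\<lambda>k. c k \<omega>) {i})
                  (PiM {j} (\<lambda>_. borel)) (\<lambda>\<omega>. restrict (\<lambda>k. c k \<omega>) {j})"
    by (rule indep_var_restrict[OF indep]) (use ij in auto)
  then have "indep_var borel ((\<lambda>x. x i) \<circ> (\<lambda>\<omega>. restrict (\<lambda>k. c k \<omega>) {i}))
                       borel ((\<lambda>x. x j) \<circ> (\<lambda>\<omega>. restrict (\<lambda>k. c k \<omega>) {j}))"
    by (rule indep_var_compose) auto
  then show ?thesis by (simp add: comp_def)
qed

lemma indep4:
  assumes "{i, j} \<inter> {k, l} = {}" "i \<ge> 1" "j \<ge> 1" "k \<ge> 1" "l \<ge> 1"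
    and [measurable]: "\<phi> \<in> borel_measurable (borel \<Otimes>\<^sub>M borel)" "\<psi> \<in> borel_measurable (borel \<Otimes>\<^sub>M borel)"
  shows "indep_var borel (\<lambda>\<omega>. \<phi> (c i \<omega>, c j \<omega>)) borel (\<lambda>\<omega>. \<psi> (c k \<omega>, c l \<omega>))"
proof -
  have "indep_var (PiM {i, j} (\<lambda>_. borel)) (\<lambda>\<omega>. restrict (\<lambda>k. c k \<omega>) {i, j})
                  (PiM {k, l} (\<lambda>_. borel)) (\<lambda>\<omega>. restrict (\<lambda>k. c k \<omega>) {k, l})"
    by (rule indep_var_restrict[OF indep]) (use assms in auto)
  then have "indep_var borel ((\<lambda>x. \<phi> (x i, x j)) \<circ> (\<lambda>\<omega>. restrict (\<lambda>k. c k \<omega>) {i, j}))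
                       borel ((\<lambda>x. \<psi> (x k, x l)) \<circ> (\<lambda>\<omega>. restrict (\<lambda>k. c k \<omega>) {k, l}))"
    by (rule indep_var_compose) auto
  then show ?thesis by (simp add: comp_def)
qed

lemma pair_nn:
  assumes ij: "i \<ge> 1" "j \<ge> 1" "i \<noteq> j" and H[measurable]: "H \<in> borel_measurable borel"
  shows "(\<integral>\<^sup>+\<omega>. H (c i \<omega> - c j \<omega>) \<partial>M) \<le> ennreal B * (\<integral>\<^sup>+t. H t \<partial>lborel)"
proof -
  define N1 where "N1 = distr M borel (c i)"
  define N2 where "N2 = distr M borel (c j)"
  have ci[measurable]: "c i \<in> borel_measurable M" and cj[measurable]: "c j \<in> borel_measurable M"
    using c_meas ij by auto
  interpret N1: prob_space N1 unfolding N1_def by (rule prob_space_distr) simp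
  interpret N2: prob_space N2 unfolding N2_def by (rule prob_space_distr) simp
  interpret P: pair_prob_space N1 N2 ..
  have ind: "indep_var borel (c i) borel (c j)" by (rule indep2[OF ij])
  have jd: "distr M (borel \<Otimes>\<^sub>M borel) (\<lambda>\<omega>. (c i \<omega>, c j \<omega>)) = N1 \<Otimes>\<^sub>M N2"
    using ind unfolding indep_var_distribution_eq N1_def N2_def by simp
  have N2d: "N2 = density lborel f" unfolding N2_def by (rule distr_c[OF ij(2)])
  have sN1: "sets N1 = sets borel" unfolding N1_def by simp
  have sN2: "sets N2 = sets borel" unfolding N2_def by simp
  have "(\<integral>\<^sup>+\<omega>. H (c i \<omega> - c j \<omega>) \<partial>M) =
        (\<integral>\<^sup>+p. H (fst p - snd p) \<partial>distr M (borel \<Otimes>\<^sub>M borel) (\<lambda>\<omega>. (c i \<omega>, c j \<omega>)))"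
    by (subst nn_integral_distr) auto
  also have "\<dots> = (\<integral>\<^sup>+p. H (fst p - snd p) \<partial>(N1 \<Otimes>\<^sub>M N2))" by (simp add: jd)
  also have "\<dots> = (\<integral>\<^sup>+x. \<integral>\<^sup>+y. H (fst (x,y) - snd (x,y)) \<partial>N2 \<partial>N1)"
  proof (rule N2.nn_integral_fst[symmetric])
    have "sets (N1 \<Otimes>\<^sub>M N2) = sets (borel \<Otimes>\<^sub>M borel)"
      by (rule sets_pair_measure_cong[OF sN1 sN2])
    then show "(\<lambda>p. H (fst p - snd p)) \<in> borel_measurable (N1 \<Otimes>\<^sub>M N2)"
      by (subst measurable_cong_sets[OF _ refl]) auto
  qed
  also have "\<dots> \<le> (\<integral>\<^sup>+x. ennreal B * (\<integral>\<^sup>+t. H t \<partial>lborel) \<partial>N1)"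
  proof (rule nn_integral_mono)
    fix x :: real
    have "(\<integral>\<^sup>+y. H (fst (x,y) - snd (x,y)) \<partial>N2) = (\<integral>\<^sup>+y. ennreal (f y) * H (x - y) \<partial>lborel)"
      unfolding N2d by (subst nn_integral_density) auto
    also have "\<dots> \<le> (\<integral>\<^sup>+y. ennreal B * H (x + (-1) * y) \<partial>lborel)"
      by (rule nn_integral_mono) (simp, rule mult_right_mono, rule ennreal_leI, rule fB, simp)
    also have "\<dots> = ennreal B * (\<integral>\<^sup>+y. H (x + (-1) * y) \<partial>lborel)"
      by (rule nn_integral_cmult) auto
    also have "(\<integral>\<^sup>+y. H (x + (-1) * y) \<partial>lborel) = (\<integral>\<^sup>+t. H t \<partial>lborel)"
      using nn_integral_real_affine[OF H, of "-1" x] by simp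
    finally show "(\<integral>\<^sup>+y. H (fst (x,y) - snd (x,y)) \<partial>N2) \<le> ennreal B * (\<integral>\<^sup>+t. H t \<partial>lborel)" .
  qed
  also have "\<dots> = ennreal B * (\<integral>\<^sup>+t. H t \<partial>lborel)"
    by (simp add: N1.emeasure_space_1)
  finally show ?thesis .
qed


definition X :: "real \<Rightarrow> nat \<times> nat \<Rightarrow> 'a \<Rightarrow> real" where
  "X \<delta> p \<omega> = gd \<delta> (c (fst p) \<omega> - c (snd p) \<omega>)"

definition vp :: "nat \<times> nat \<Rightarrow> bool" where
  "vp p \<longleftrightarrow> fst p \<ge> 1 \<and> snd p \<ge> 1 \<and> fst p \<noteq> snd p"

lemma X_meas: "vp p \<Longrightarrow> X \<delta> p \<in> borel_measurable M"
proof -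
  assume "vp p"
  then have [measurable]: "c (fst p) \<in> borel_measurable M" "c (snd p) \<in> borel_measurable M"
    using c_meas unfolding vp_def by auto
  show ?thesis unfolding X_def by measurable
qed

lemma X_nonneg: "\<delta> \<le> 1 \<Longrightarrow> 0 \<le> X \<delta> p \<omega>"
  unfolding X_def by (rule gd_nonneg)

lemma X_first:
  assumes "vp p" "0 < \<delta>" "\<delta> \<le> 1"
  shows "(\<integral>\<^sup>+\<omega>. ennreal (X \<delta> p \<omega>) \<partial>M) \<le> ennreal (8 * B * sqrt \<delta>)"
proof -
  have "(\<integral>\<^sup>+\<omega>. ennreal (X \<delta> p \<omega>) \<partial>M) = (\<integral>\<^sup>+\<omega>. ennreal (gd \<delta> (c (fst p) \<omega> - c (snd p) \<omega>)) \<partial>M)"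
    unfolding X_def ..
  also have "\<dots> \<le> ennreal B * (\<integral>\<^sup>+t. ennreal (gd \<delta> t) \<partial>lborel)"
    by (rule pair_nn) (use assms in \<open>auto simp: vp_def\<close>)
  also have "(\<integral>\<^sup>+t. ennreal (gd \<delta> t) \<partial>lborel) \<le> (\<integral>\<^sup>+t. ennreal 2 * ennreal (hfun \<delta> t) \<partial>lborel)"
  proof (rule nn_integral_mono)
    fix t
    have "ennreal (gd \<delta> t) \<le> ennreal (2 * hfun \<delta> t)" by (rule ennreal_leI) (rule gd_le[OF assms(3)])
    also have "ennreal (2 * hfun \<delta> t) = ennreal 2 * ennreal (hfun \<delta> t)" by (rule ennreal_mult') simp
    finally show "ennreal (gd \<delta> t) \<le> ennreal 2 * ennreal (hfun \<delta> t)" .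
  qed
  also have "\<dots> = ennreal 2 * (\<integral>\<^sup>+t. ennreal (hfun \<delta> t) \<partial>lborel)"
    by (rule nn_integral_cmult) auto
  also have "\<dots> \<le> ennreal 2 * ennreal (4 * sqrt \<delta>)"
    by (rule mult_left_mono) (use hfun_int[OF assms(2)] in auto)
  finally have "(\<integral>\<^sup>+\<omega>. ennreal (X \<delta> p \<omega>) \<partial>M) \<le> ennreal B * (ennreal 2 * ennreal (4 * sqrt \<delta>))"
    by (simp add: mult_left_mono)
  also have "\<dots> = ennreal (8 * B * sqrt \<delta>)"
    using Bpos assms by (simp add: ennreal_mult mult_ac)
  finally show ?thesis .
qed

lemma X_second:
  assumes "vp p" "0 < \<delta>" "\<delta> \<le> 1"
  shows "(\<integral>\<^sup>+\<omega>. ennreal ((X \<delta> p \<omega>)\<^sup>2) \<partial>M) \<le> ennreal (64 * B)"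
proof -
  have "(\<integral>\<^sup>+\<omega>. ennreal ((X \<delta> p \<omega>)\<^sup>2) \<partial>M) = (\<integral>\<^sup>+\<omega>. ennreal ((gd \<delta> (c (fst p) \<omega> - c (snd p) \<omega>))\<^sup>2) \<partial>M)"
    unfolding X_def ..
  also have "\<dots> \<le> ennreal B * (\<integral>\<^sup>+t. ennreal ((gd \<delta> t)\<^sup>2) \<partial>lborel)"
    by (rule pair_nn) (use assms in \<open>auto simp: vp_def\<close>)
  also have "(\<integral>\<^sup>+t. ennreal ((gd \<delta> t)\<^sup>2) \<partial>lborel) \<le> (\<integral>\<^sup>+t. ennreal 16 * ennreal (hfun 1 t) \<partial>lborel)"
  proof (rule nn_integral_mono)
    fix t
    have "ennreal ((gd \<delta> t)\<^sup>2) \<le> ennreal (16 * hfun 1 t)" by (rule ennreal_leI) (rule gd_sq_le[OF assms(3)])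
    also have "ennreal (16 * hfun 1 t) = ennreal 16 * ennreal (hfun 1 t)" by (rule ennreal_mult') simp
    finally show "ennreal ((gd \<delta> t)\<^sup>2) \<le> ennreal 16 * ennreal (hfun 1 t)" .
  qed
  also have "\<dots> = ennreal 16 * (\<integral>\<^sup>+t. ennreal (hfun 1 t) \<partial>lborel)"
    by (rule nn_integral_cmult) auto
  also have "\<dots> \<le> ennreal 16 * ennreal (4 * sqrt 1)"
    by (rule mult_left_mono) (use hfun_int[of 1] in auto)
  finally have "(\<integral>\<^sup>+\<omega>. ennreal ((X \<delta> p \<omega>)\<^sup>2) \<partial>M) \<le> ennreal B * (ennreal 16 * ennreal (4 * sqrt 1))"
    by (simp add: mult_left_mono)
  also have "\<dots> = ennreal (64 * B)"
    using Bpos assms by (simp add: ennreal_mult mult_ac)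
  finally show ?thesis .
qed

lemma X_int:
  assumes "vp p" "0 < \<delta>" "\<delta> \<le> 1"
  shows "integrable M (X \<delta> p)" "integrable M (\<lambda>\<omega>. (X \<delta> p \<omega>)\<^sup>2)"
proof -
  have [measurable]: "X \<delta> p \<in> borel_measurable M" by (rule X_meas[OF assms(1)])
  show "integrable M (X \<delta> p)"
    by (rule integrableI_nonneg) (use X_first[OF assms] X_nonneg[OF assms(3)] in \<open>auto simp: less_top[symmetric] top_unique intro: le_less_trans\<close>)
  show "integrable M (\<lambda>\<omega>. (X \<delta> p \<omega>)\<^sup>2)"
    by (rule integrableI_nonneg) (use X_second[OF assms] in \<open>auto intro: le_less_trans\<close>)
qed

lemma X_exp:
  assumes "vp p" "0 < \<delta>" "\<delta> \<le> 1"
  shows "expectation (X \<delta> p) \<le> 8 * B * sqrt \<delta>"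
proof -
  have "ennreal (expectation (X \<delta> p)) = (\<integral>\<^sup>+\<omega>. ennreal (X \<delta> p \<omega>) \<partial>M)"
    by (rule nn_integral_eq_integral[symmetric]) (use X_int[OF assms] X_nonneg[OF assms(3)] in auto)
  also have "\<dots> \<le> ennreal (8 * B * sqrt \<delta>)" by (rule X_first[OF assms])
  finally show ?thesis using Bpos assms by (simp add: ennreal_le_iff)
qed

lemma X_exp2:
  assumes "vp p" "0 < \<delta>" "\<delta> \<le> 1"
  shows "expectation (\<lambda>\<omega>. (X \<delta> p \<omega>)\<^sup>2) \<le> 64 * B"
proof -
  have "ennreal (expectation (\<lambda>\<omega>. (X \<delta> p \<omega>)\<^sup>2)) = (\<integral>\<^sup>+\<omega>. ennreal ((X \<delta> p \<omega>)\<^sup>2) \<partial>M)"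
    by (rule nn_integral_eq_integral[symmetric]) (use X_int[OF assms] in auto)
  also have "\<dots> \<le> ennreal (64 * B)" by (rule X_second[OF assms])
  finally show ?thesis using Bpos assms by (simp add: ennreal_le_iff)
qed

lemma X_indep_var:
  assumes "vp p" "vp q" "{fst p, snd p} \<inter> {fst q, snd q} = {}"
  shows "indep_var borel (X \<delta> p) borel (X \<delta> q)"
proof -
  have "indep_var borel (\<lambda>\<omega>. (\<lambda>z. gd \<delta> (fst z - snd z)) (c (fst p) \<omega>, c (snd p) \<omega>))
                  borel (\<lambda>\<omega>. (\<lambda>z. gd \<delta> (fst z - snd z)) (c (fst q) \<omega>, c (snd q) \<omega>))"
    by (rule indep4) (use assms in \<open>auto simp: vp_def\<close>)
  then show ?thesis
    by (simp add: X_def[abs_def])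
qed

lemma X_indep:
  assumes "vp p" "vp q" "{fst p, snd p} \<inter> {fst q, snd q} = {}" "0 < \<delta>" "\<delta> \<le> 1"
  shows "expectation (\<lambda>\<omega>. X \<delta> p \<omega> * X \<delta> q \<omega>) = expectation (X \<delta> p) * expectation (X \<delta> q)"
    and "integrable M (\<lambda>\<omega>. X \<delta> p \<omega> * X \<delta> q \<omega>)"
  using indep_var_lebesgue_integral[OF X_indep_var[OF assms(1-3)]]
    indep_var_integrable[OF X_indep_var[OF assms(1-3)]] X_int assms by auto


definition Ik :: "nat \<Rightarrow> nat set" where "Ik k = {2^k..<2^(k+2)}"
definition Pk :: "nat \<Rightarrow> nat \<Rightarrow> (nat \<times> nat) set" where
  "Pk k k' = {p \<in> Ik k \<times> Ik k'. fst p \<noteq> snd p}"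
definition T :: "real \<Rightarrow> nat \<Rightarrow> nat \<Rightarrow> 'a \<Rightarrow> real" where
  "T \<delta> k k' \<omega> = (\<Sum>p\<in>Pk k k'. X \<delta> p \<omega>)"
definition dlt :: "real \<Rightarrow> real" where "dlt \<epsilon> = min 1 ((\<epsilon> / (144 * B))\<^sup>2)"
definition ov :: "nat \<times> nat \<Rightarrow> nat \<times> nat \<Rightarrow> bool" where
  "ov p q \<longleftrightarrow> {fst p, snd p} \<inter> {fst q, snd q} \<noteq> {}"

lemma card_Ik: "card (Ik k) = 3 * 2^k"
  unfolding Ik_def by (simp add: power_add)

lemma fin_Ik: "finite (Ik k)" unfolding Ik_def by simp

lemma fin_Pk: "finite (Pk k k')"
  unfolding Pk_def using fin_Ik by (auto intro: finite_subset[of _ "Ik k \<times> Ik k'"])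

lemma Pk_vp: "p \<in> Pk k k' \<Longrightarrow> vp p"
proof -
  assume p: "p \<in> Pk k k'"
  have "(1::nat) \<le> 2^k" "(1::nat) \<le> 2^k'" by simp_all
  then show ?thesis using p unfolding Pk_def Ik_def vp_def by auto
qed

lemma card_Pk: "card (Pk k k') \<le> 9 * 2^k * 2^k'"
proof -
  have "card (Pk k k') \<le> card (Ik k \<times> Ik k')"
    by (rule card_mono) (auto simp: Pk_def fin_Ik)
  also have "\<dots> = 9 * 2^k * 2^k'" by (simp add: card_cartesian_product card_Ik)
  finally show ?thesis .
qed

lemma card_ov: "p \<in> Pk k k' \<Longrightarrow> card {q \<in> Pk k k'. ov p q} \<le> 6 * 2^k' + 6 * 2^k"
proof -
  assume p: "p \<in> Pk k k'"
  let ?S = "{fst p, snd p}"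
  have "{q \<in> Pk k k'. ov p q} \<subseteq> (?S \<times> Ik k') \<union> (Ik k \<times> ?S)"
    unfolding Pk_def ov_def by auto
  then have "card {q \<in> Pk k k'. ov p q} \<le> card ((?S \<times> Ik k') \<union> (Ik k \<times> ?S))"
    by (rule card_mono[rotated]) (simp add: fin_Ik)
  also have "\<dots> \<le> card (?S \<times> Ik k') + card (Ik k \<times> ?S)" by (rule card_Un_le)
  also have "card (?S \<times> Ik k') \<le> 2 * (3 * 2^k')"
    unfolding card_cartesian_product card_Ik
    by (rule mult_right_mono) (auto simp: card_insert_le_m1)
  also have "card (Ik k \<times> ?S) \<le> (3 * 2^k) * 2"
    unfolding card_cartesian_product card_Ik
    by (rule mult_left_mono) (auto simp: card_insert_le_m1)
  finally show ?thesis by simp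
qed

lemma dlt_pos: "0 < \<epsilon> \<Longrightarrow> 0 < dlt \<epsilon>"
  unfolding dlt_def using Bpos by simp

lemma dlt_le1: "dlt \<epsilon> \<le> 1"
  unfolding dlt_def by simp

lemma dlt_sqrt: "0 < \<epsilon> \<Longrightarrow> 144 * B * sqrt (dlt \<epsilon>) \<le> \<epsilon>"
proof -
  assume e: "0 < \<epsilon>"
  have "sqrt (dlt \<epsilon>) \<le> sqrt ((\<epsilon> / (144 * B))\<^sup>2)" unfolding dlt_def by (rule real_sqrt_le_mono) simp
  also have "\<dots> = \<epsilon> / (144 * B)" using e Bpos by simp
  finally show ?thesis using Bpos by (simp add: field_simps)
qed

lemma T_meas: "T \<delta> k k' \<in> borel_measurable M"
  unfolding T_def[abs_def] using X_meas Pk_vp by (auto intro!: borel_measurable_sum)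


lemma bad_prob:
  assumes e: "0 < \<epsilon>"
  shows "prob {\<omega> \<in> space M. \<epsilon> * 2^(k+k') \<le> T (dlt \<epsilon>) k k' \<omega>} \<le> 13824 * B / \<epsilon>\<^sup>2 * (1/2^k + 1/2^k')"
proof -
  define \<delta> :: real where "\<delta> = dlt \<epsilon>"
  have d: "0 < \<delta>" "\<delta> \<le> 1" using dlt_pos[OF e] dlt_le1 unfolding \<delta>_def by auto
  define P where "P = Pk k k'"
  have finP: "finite P" and vpP: "\<And>p. p \<in> P \<Longrightarrow> vp p" using fin_Pk Pk_vp unfolding P_def by auto
  define m where "m p = expectation (X \<delta> p)" for p
  define a :: real where "a = 2^k"
  define b :: real where "b = 2^k'"
  have ab: "0 < a" "0 < b" unfolding a_def b_def by auto
  have pow: "(2::real)^(k+k') = a * b" unfolding a_def b_def by (simp add: power_add)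
  have Xint1: "integrable M (X \<delta> p)" if "p \<in> P" for p using X_int(1)[OF vpP[OF that] d] .
  have Xint2: "integrable M (\<lambda>\<omega>. (X \<delta> p \<omega>)\<^sup>2)" if "p \<in> P" for p using X_int(2)[OF vpP[OF that] d] .
  have Xm: "X \<delta> p \<in> borel_measurable M" if "p \<in> P" for p using X_meas[OF vpP[OF that]] .
  have Tm[measurable]: "T \<delta> k k' \<in> borel_measurable M" by (rule T_meas)
  have cardP: "real (card P) \<le> 9 * a * b"
  proof -
    have "real (card P) \<le> real (9 * 2^k * 2^k')" using card_Pk[of k k'] unfolding P_def of_nat_le_iff .
    then show ?thesis by (simp add: a_def b_def)
  qed
  have ET: "expectation (T \<delta> k k') = (\<Sum>p\<in>P. m p)"
    unfolding T_def[abs_def] m_def P_def[symmetric]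
    by (rule Bochner_Integration.integral_sum) (use Xint1 in auto)
  have ETle: "expectation (T \<delta> k k') \<le> \<epsilon>/2 * (a*b)"
  proof -
    have "(\<Sum>p\<in>P. m p) \<le> (\<Sum>p\<in>P. 8 * B * sqrt \<delta>)"
      by (rule sum_mono) (use X_exp vpP d in \<open>auto simp: m_def\<close>)
    also have "\<dots> = real (card P) * (8 * B * sqrt \<delta>)" by simp
    also have "\<dots> \<le> (9 * a * b) * (8 * B * sqrt \<delta>)"
      by (rule mult_right_mono[OF cardP]) (use Bpos d in simp)
    also have "\<dots> = (72 * B * sqrt \<delta>) * (a * b)" by (simp add: algebra_simps)
    also have "\<dots> \<le> \<epsilon>/2 * (a*b)"
      by (rule mult_right_mono) (use dlt_sqrt[OF e] ab in \<open>auto simp: \<delta>_def\<close>)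
    finally show ?thesis using ET by simp
  qed
  define U where "U = {\<omega> \<in> space M. \<epsilon>/2 * (a*b) \<le> \<bar>T \<delta> k k' \<omega> - expectation (T \<delta> k k')\<bar>}"
  have sub: "{\<omega> \<in> space M. \<epsilon> * 2^(k+k') \<le> T (dlt \<epsilon>) k k' \<omega>} \<subseteq> U"
  proof (rule subsetI)
    fix \<omega> assume "\<omega> \<in> {\<omega> \<in> space M. \<epsilon> * 2^(k+k') \<le> T (dlt \<epsilon>) k k' \<omega>}"
    then have w: "\<omega> \<in> space M" "\<epsilon> * (a*b) \<le> T \<delta> k k' \<omega>" unfolding pow \<delta>_def[symmetric] by auto
    have "T \<delta> k k' \<omega> - expectation (T \<delta> k k') \<le> \<bar>T \<delta> k k' \<omega> - expectation (T \<delta> k k')\<bar>" by (rule abs_ge_self)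
    then have "\<epsilon>/2 * (a*b) \<le> \<bar>T \<delta> k k' \<omega> - expectation (T \<delta> k k')\<bar>" using w ETle by linarith
    then show "\<omega> \<in> U" unfolding U_def using w by auto
  qed
  have "prob {\<omega> \<in> space M. \<epsilon> * 2^(k+k') \<le> T (dlt \<epsilon>) k k' \<omega>} \<le> prob U"
    by (rule finite_measure_mono[OF sub]) (unfold U_def, measurable)
  have T2: "integrable M (\<lambda>\<omega>. (T \<delta> k k' \<omega>)\<^sup>2)"
    unfolding T_def[abs_def] P_def[symmetric]
    by (rule sq_sum_integrable) (use finP Xm Xint2 in auto)
  have cheb: "prob U \<le> variance (T \<delta> k k') / (\<epsilon>/2 * (a*b))\<^sup>2"
    unfolding U_def by (rule Chebyshev_inequality) (use T2 e ab in auto)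
  have varT: "variance (T \<delta> k k') \<le> (9*a*b) * (6*b + 6*a) * (64 * B)"
  proof -
    have eq: "(\<lambda>\<omega>. (T \<delta> k k' \<omega> - expectation (T \<delta> k k'))\<^sup>2) = (\<lambda>\<omega>. (\<Sum>p\<in>P. (X \<delta> p \<omega> - m p))\<^sup>2)"
      unfolding ET unfolding T_def[abs_def] P_def[symmetric] by (simp add: sum_subtractf)
    have "variance (T \<delta> k k') = expectation (\<lambda>\<omega>. (\<Sum>p\<in>P. (X \<delta> p \<omega> - m p))\<^sup>2)"
      by (simp only: eq)
    also have "\<dots> \<le> (\<Sum>p\<in>P. real (card {q\<in>P. ov p q})) * (64 * B)"
    proof (rule var_sum_bound[OF finP])
      fix p assume p: "p \<in> P"
      show "(\<lambda>\<omega>. X \<delta> p \<omega> - m p) \<in> borel_measurable M" using Xm[OF p] by simp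
      show "integrable M (\<lambda>\<omega>. (X \<delta> p \<omega> - m p)\<^sup>2)"
        using Xint1[OF p] Xint2[OF p] by (simp add: power2_diff)
      have "expectation (\<lambda>\<omega>. (X \<delta> p \<omega> - m p)\<^sup>2) = expectation (\<lambda>\<omega>. (X \<delta> p \<omega>)\<^sup>2) - (m p)\<^sup>2"
        unfolding m_def by (rule variance_eq) (use Xint1[OF p] Xint2[OF p] in auto)
      also have "\<dots> \<le> 64 * B" using X_exp2[OF vpP[OF p] d] zero_le_power2[of "m p"] by linarith
      finally show "expectation (\<lambda>\<omega>. (X \<delta> p \<omega> - m p)\<^sup>2) \<le> 64 * B" .
    next
      fix p q assume p: "p \<in> P" and q: "q \<in> P" and nov: "\<not> ov p q"
      have disj: "{fst p, snd p} \<inter> {fst q, snd q} = {}" using nov unfolding ov_def by simp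
      note ind = X_indep[OF vpP[OF p] vpP[OF q] disj d]
      have "(\<lambda>\<omega>. (X \<delta> p \<omega> - m p) * (X \<delta> q \<omega> - m q)) =
            (\<lambda>\<omega>. X \<delta> p \<omega> * X \<delta> q \<omega> - m q * X \<delta> p \<omega> - m p * X \<delta> q \<omega> + m p * m q)"
        by (simp add: fun_eq_iff algebra_simps)
      then have "expectation (\<lambda>\<omega>. (X \<delta> p \<omega> - m p) * (X \<delta> q \<omega> - m q)) =
            expectation (\<lambda>\<omega>. X \<delta> p \<omega> * X \<delta> q \<omega>) - m q * expectation (X \<delta> p) - m p * expectation (X \<delta> q) + m p * m q"
        using ind(2) Xint1[OF p] Xint1[OF q] by (simp add: prob_space)
      also have "\<dots> = 0" using ind(1) unfolding m_def by simp
      finally show "expectation (\<lambda>\<omega>. (X \<delta> p \<omega> - m p) * (X \<delta> q \<omega> - m q)) = 0" .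
    qed
    also have "\<dots> \<le> (9*a*b) * (6*b + 6*a) * (64 * B)"
    proof (rule mult_right_mono)
      have "(\<Sum>p\<in>P. real (card {q\<in>P. ov p q})) \<le> (\<Sum>p\<in>P. 6*b + 6*a)"
      proof (rule sum_mono)
        fix p assume p: "p \<in> P"
        have "real (card {q\<in>P. ov p q}) \<le> real (6 * 2^k' + 6 * 2^k)"
          using card_ov[of p k k'] p unfolding P_def of_nat_le_iff by simp
        then show "real (card {q\<in>P. ov p q}) \<le> 6*b + 6*a" by (simp add: a_def b_def)
      qed
      also have "\<dots> = real (card P) * (6*b + 6*a)" by simp
      also have "\<dots> \<le> (9*a*b) * (6*b + 6*a)"
        by (rule mult_right_mono[OF cardP]) (use ab in simp)
      finally show "(\<Sum>p\<in>P. real (card {q\<in>P. ov p q})) \<le> (9*a*b) * (6*b + 6*a)" .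
    qed (use Bpos in simp)
    finally show ?thesis .
  qed
  have "prob {\<omega> \<in> space M. \<epsilon> * 2^(k+k') \<le> T (dlt \<epsilon>) k k' \<omega>} \<le> variance (T \<delta> k k') / (\<epsilon>/2 * (a*b))\<^sup>2"
    using \<open>prob {\<omega> \<in> space M. \<epsilon> * 2^(k+k') \<le> T (dlt \<epsilon>) k k' \<omega>} \<le> prob U\<close> cheb by linarith
  also have "\<dots> \<le> ((9*a*b) * (6*b + 6*a) * (64 * B)) / (\<epsilon>/2 * (a*b))\<^sup>2"
    by (rule divide_right_mono[OF varT]) simp
  also have "\<dots> = 13824 * B / \<epsilon>\<^sup>2 * (1/a + 1/b)"
    using ab e by (simp add: field_simps power2_eq_square)
  finally show ?thesis by (simp add: a_def b_def)
qed

definition EK :: "real \<Rightarrow> nat \<Rightarrow> 'a set" where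
  "EK \<epsilon> K = (\<Union>k1\<in>{K..2*K}. \<Union>k2\<in>{K..2*K}. {\<omega> \<in> space M. \<epsilon> * 2^(k1+k2) \<le> T (dlt \<epsilon>) k1 k2 \<omega>})"

lemma bad_sets: "{\<omega> \<in> space M. \<epsilon> * 2^(k1+k2) \<le> T \<delta> k1 k2 \<omega>} \<in> sets M"
proof -
  have [measurable]: "T \<delta> k1 k2 \<in> borel_measurable M" by (rule T_meas)
  show ?thesis by measurable
qed

lemma EK_sets: "EK \<epsilon> K \<in> sets M"
  unfolding EK_def using bad_sets by (intro sets.finite_UN) auto

lemma EK_prob:
  assumes e: "0 < \<epsilon>"
  shows "prob (EK \<epsilon> K) \<le> (27648 * B / \<epsilon>\<^sup>2) * (real ((K+1)^2) * (1/2)^K)"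
proof -
  define C where "C = 13824 * B / \<epsilon>\<^sup>2"
  have C: "0 \<le> C" unfolding C_def using Bpos by simp
  define A where "A k1 k2 = {\<omega> \<in> space M. \<epsilon> * 2^(k1+k2) \<le> T (dlt \<epsilon>) k1 k2 \<omega>}" for k1 k2
  have Ab: "prob (A k1 k2) \<le> C * (2 * (1/2)^K)" if "k1 \<ge> K" "k2 \<ge> K" for k1 k2
  proof -
    have p: "prob (A k1 k2) \<le> C * (1/2^k1 + 1/2^k2)" unfolding A_def C_def by (rule bad_prob[OF e])
    have hK: "(1/2::real)^K = 1/2^K" by (simp add: power_divide)
    have h1: "1/(2::real)^k1 \<le> 1/2^K" by (rule divide_left_mono) (use that in \<open>auto intro: power_increasing\<close>)
    have h2: "1/(2::real)^k2 \<le> 1/2^K" by (rule divide_left_mono) (use that in \<open>auto intro: power_increasing\<close>)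
    have "C * (1/2^k1 + 1/2^k2) \<le> C * (2 * (1/2)^K)"
      by (rule mult_left_mono) (use h1 h2 hK C in auto)
    then show ?thesis using p by linarith
  qed
  have "prob (EK \<epsilon> K) = prob (\<Union>k1\<in>{K..2*K}. \<Union>k2\<in>{K..2*K}. A k1 k2)" unfolding EK_def A_def ..
  also have "\<dots> \<le> (\<Sum>k1\<in>{K..2*K}. prob (\<Union>k2\<in>{K..2*K}. A k1 k2))"
    by (rule finite_measure_subadditive_finite) (use bad_sets in \<open>auto simp: A_def intro!: sets.finite_UN\<close>)
  also have "\<dots> \<le> (\<Sum>k1\<in>{K..2*K}. \<Sum>k2\<in>{K..2*K}. prob (A k1 k2))"
    by (rule sum_mono, rule finite_measure_subadditive_finite) (use bad_sets in \<open>auto simp: A_def\<close>)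
  also have "\<dots> \<le> (\<Sum>k1\<in>{K..2*K}. \<Sum>k2\<in>{K..2*K}. C * (2 * (1/2)^K))"
    by (intro sum_mono Ab) auto
  also have "\<dots> = real (K+1) * real (K+1) * (C * (2 * (1/2)^K))" by simp
  also have "\<dots> = (27648 * B / \<epsilon>\<^sup>2) * (real ((K+1)^2) * (1/2)^K)"
    unfolding C_def by (simp add: power2_eq_square algebra_simps add_divide_distrib)
  finally show ?thesis .
qed

lemma summable_poly_geom: "summable (\<lambda>K::nat. real ((K+1)^2) * (1/2)^K)"
proof (rule summable_ratio_test[where c="3/4" and N=4])
  fix K :: nat assume K: "K \<ge> 4"
  define x where "x = real K"
  have x: "4 \<le> x" unfolding x_def using K by simp
  have "0 \<le> (x - 4) * (x + 2)" using x by simp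
  then have r: "2 * (x + 2)^2 \<le> 3 * (x + 1)^2" by (simp add: power2_eq_square algebra_simps)
  have e1: "real ((Suc K + 1)^2) = (x + 2)^2" unfolding x_def by simp
  have e2: "real ((K + 1)^2) = (x + 1)^2" unfolding x_def by simp
  have "(x + 2)^2 * (1/2::real)^(Suc K) = (2 * (x + 2)^2) * ((1/2)^K / 4)" by simp
  also have "\<dots> \<le> (3 * (x + 1)^2) * ((1/2)^K / 4)"
    by (rule mult_right_mono[OF r]) simp
  also have "\<dots> = 3/4 * ((x + 1)^2 * (1/2)^K)" by simp
  finally show "norm (real ((Suc K + 1)^2) * (1/2)^(Suc K)) \<le> 3/4 * norm (real ((K+1)^2) * (1/2::real)^K)"
    unfolding e1 e2 by simp
qed simp

lemma AE_eps:
  assumes e: "0 < \<epsilon>"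
  shows "AE \<omega> in M. eventually (\<lambda>K. \<omega> \<in> space M - EK \<epsilon> K) sequentially"
proof (rule borel_cantelli_AE1)
  show "\<And>n. EK \<epsilon> n \<in> sets M" by (rule EK_sets)
  show "\<And>n. emeasure M (EK \<epsilon> n) < \<infinity>" by (simp add: less_top[symmetric])
  show "summable (\<lambda>n. measure M (EK \<epsilon> n))"
  proof (rule summable_comparison_test')
    show "summable (\<lambda>K. (27648 * B / \<epsilon>\<^sup>2) * (real ((K+1)^2) * (1/2)^K))"
      by (rule summable_mult) (rule summable_poly_geom)
    fix n :: nat
    show "norm (measure M (EK \<epsilon> n)) \<le> (27648 * B / \<epsilon>\<^sup>2) * (real ((n+1)^2) * (1/2)^n)"
      using EK_prob[OF e, of n] by simp
  qed
qed


lemma scale_le: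
  assumes n: "n \<ge> 2" and K: "n < 2^(K+1)" and s: "n' \<in> scales n"
  shows "\<exists>t. n' = 2^t * n \<and> t \<le> K"
proof -
  obtain t where t: "n' = 2^t * n" "int t \<le> qfun n" using s unfolding scales_def by auto
  have "real_of_int (int t) \<le> log 2 (ln (real n))" using t(2) unfolding qfun_def le_floor_iff .
  then have tl: "real t \<le> log 2 (ln (real n))" by simp
  have lnpos: "0 < ln (real n)" using n by simp
  have "2 powr (real t) \<le> ln (real n)" using tl lnpos by (simp add: le_log_iff)
  then have "real (2^t) \<le> ln (real n)" by (simp add: powr_realpow)
  also have "\<dots> < real n" using n by (intro ln_less_self) simp
  also have "\<dots> < real (2^(K+1))" using K by (simp only: of_nat_less_iff)
  finally have "(2::nat)^t < 2^(K+1)" by (simp only: of_nat_less_iff)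
  then have "t < K + 1" by (rule power_less_imp_less_exp[rotated]) simp
  then show ?thesis using t by auto
qed

lemma det_bound:
  assumes w: "\<omega> \<in> space M" and e: "0 < e" and K0: "\<forall>K\<ge>K0. \<omega> \<in> space M - EK e K"
    and n: "n \<ge> 2" "2^K0 \<le> n" and n': "n' \<in> scales n" and n'': "n'' \<in> scales n"
  shows "(1 / real (card (blockA n' \<times> blockA n''))) *
             (\<Sum>(i,j)\<in>{(i,j). i \<in> blockA n' \<and> j \<in> blockA n'' \<and> i \<noteq> j \<and>
                             \<bar>c i \<omega> - c j \<omega>\<bar> < dlt e}.
                 - ln \<bar>c i \<omega> - c j \<omega>\<bar>) < e"
proof -
  define \<delta> where "\<delta> = dlt e"
  have d: "0 < \<delta>" "\<delta> \<le> 1" unfolding \<delta>_def using dlt_pos[OF e] dlt_le1 by auto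
  obtain K where K: "2^K \<le> n" "n < 2^(K+1)" using ex_power_ivl1[of 2 n] n by auto
  have "(2::nat)^K0 < 2^(K+1)" using K n by linarith
  then have "K0 < K + 1" by (rule power_less_imp_less_exp[rotated]) simp
  then have KK0: "K0 \<le> K" by simp
  obtain t1 where t1: "n' = 2^t1 * n" "t1 \<le> K" using scale_le[OF n(1) K(2) n'] by auto
  obtain t2 where t2: "n'' = 2^t2 * n" "t2 \<le> K" using scale_le[OF n(1) K(2) n''] by auto
  define k1 where "k1 = K + t1"
  define k2 where "k2 = K + t2"
  have k1r: "k1 \<in> {K..2*K}" "k2 \<in> {K..2*K}" unfolding k1_def k2_def using t1 t2 by auto
  have notE: "\<omega> \<notin> EK e K" using K0 KK0 by auto
  have Tlt: "T \<delta> k1 k2 \<omega> < e * 2^(k1+k2)"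
    using notE k1r w unfolding EK_def \<delta>_def by force
  have lo1: "2^k1 \<le> n'" unfolding k1_def t1(1) using K(1) by (simp add: power_add)
  have hi1: "2 * n' \<le> 2^(k1+2)"
  proof -
    have "2 * n' = 2 * 2^t1 * n" using t1 by simp
    also have "\<dots> \<le> 2 * 2^t1 * 2^(K+1)" using K(2) by simp
    also have "\<dots> = 2^(k1+2)" unfolding k1_def by (simp add: power_add)
    finally show ?thesis .
  qed
  have lo2: "2^k2 \<le> n''" unfolding k2_def t2(1) using K(1) by (simp add: power_add)
  have hi2: "2 * n'' \<le> 2^(k2+2)"
  proof -
    have "2 * n'' = 2 * 2^t2 * n" using t2 by simp
    also have "\<dots> \<le> 2 * 2^t2 * 2^(K+1)" using K(2) by simp
    also have "\<dots> = 2^(k2+2)" unfolding k2_def by (simp add: power_add)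
    finally show ?thesis .
  qed
  define S where "S = {(i,j). i \<in> blockA n' \<and> j \<in> blockA n'' \<and> i \<noteq> j \<and> \<bar>c i \<omega> - c j \<omega>\<bar> < \<delta>}"
  have SP: "S \<subseteq> Pk k1 k2"
    unfolding S_def Pk_def Ik_def blockA_def using lo1 hi1 lo2 hi2 by auto
  have sum_eq: "(\<Sum>(i,j)\<in>S. - ln \<bar>c i \<omega> - c j \<omega>\<bar>) = (\<Sum>p\<in>S. X \<delta> p \<omega>)"
    by (rule sum.cong) (auto simp: S_def X_def gd_def)
  also have "\<dots> \<le> (\<Sum>p\<in>Pk k1 k2. X \<delta> p \<omega>)"
    by (rule sum_mono2[OF fin_Pk SP]) (use X_nonneg d in auto)
  also have "\<dots> = T \<delta> k1 k2 \<omega>" unfolding T_def ..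
  finally have ST: "(\<Sum>(i,j)\<in>S. - ln \<bar>c i \<omega> - c j \<omega>\<bar>) \<le> T \<delta> k1 k2 \<omega>" .
  have cardN: "card (blockA n' \<times> blockA n'') = n' * n''"
    unfolding blockA_def by (simp add: card_cartesian_product)
  define N where "N = real (n' * n'')"
  have NP: "(2::real)^(k1+k2) \<le> N"
  proof -
    have "(2::nat)^(k1+k2) \<le> n' * n''" unfolding power_add using lo1 lo2 by (rule mult_le_mono)
    then show ?thesis unfolding N_def by (metis of_nat_le_iff of_nat_numeral of_nat_power)
  qed
  have Npos: "0 < N" using NP by (smt (verit) zero_less_power)
  have "(\<Sum>(i,j)\<in>S. - ln \<bar>c i \<omega> - c j \<omega>\<bar>) < e * N"
    using ST Tlt mult_left_mono[OF NP, of e] e by linarith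
  then have "(1 / N) * (\<Sum>(i,j)\<in>S. - ln \<bar>c i \<omega> - c j \<omega>\<bar>) < e"
    using Npos by (simp add: field_simps)
  then show ?thesis unfolding cardN N_def[symmetric] S_def \<delta>_def .
qed

lemma main:
  "AE \<omega> in M. \<forall>\<epsilon>>0. \<exists>\<delta>>0. \<forall>\<^sub>F n in sequentially.
           \<forall>n'\<in>scales n. \<forall>n''\<in>scales n.
             (1 / real (card (blockA n' \<times> blockA n''))) *
             (\<Sum>(i,j)\<in>{(i,j). i \<in> blockA n' \<and> j \<in> blockA n'' \<and> i \<noteq> j \<and>
                             \<bar>c i \<omega> - c j \<omega>\<bar> < \<delta>}.
                 - ln \<bar>c i \<omega> - c j \<omega>\<bar>) < \<epsilon>"
proof -
  have "AE \<omega> in M. \<forall>m::nat. eventually (\<lambda>K. \<omega> \<in> space M - EK (inverse (real (Suc m))) K) sequentially"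
    unfolding AE_all_countable by (intro allI AE_eps) simp
  note A = this
  show ?thesis
  proof (rule AE_mp[OF A], rule AE_I2, intro impI allI)
    fix \<omega> and \<epsilon> :: real
    assume w: "\<omega> \<in> space M"
      and H: "\<forall>m::nat. eventually (\<lambda>K. \<omega> \<in> space M - EK (inverse (real (Suc m))) K) sequentially"
      and \<epsilon>: "0 < \<epsilon>"
    show "\<exists>\<delta>>0. \<forall>\<^sub>F n in sequentially.
           \<forall>n'\<in>scales n. \<forall>n''\<in>scales n.
             (1 / real (card (blockA n' \<times> blockA n''))) *
             (\<Sum>(i,j)\<in>{(i,j). i \<in> blockA n' \<and> j \<in> blockA n'' \<and> i \<noteq> j \<and>
                             \<bar>c i \<omega> - c j \<omega>\<bar> < \<delta>}.
                 - ln \<bar>c i \<omega> - c j \<omega>\<bar>) < \<epsilon>"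
    proof -
      obtain m :: nat where m: "inverse (real (Suc m)) < \<epsilon>" using reals_Archimedean[OF \<epsilon>] by auto
      define e where "e = inverse (real (Suc m))"
      have e: "0 < e" unfolding e_def by simp
      obtain K0 where K0: "\<forall>K\<ge>K0. \<omega> \<in> space M - EK e K"
        using H[rule_format, of m] unfolding e_def eventually_sequentially by auto
      show "\<exists>\<delta>>0. \<forall>\<^sub>F n in sequentially.
           \<forall>n'\<in>scales n. \<forall>n''\<in>scales n.
             (1 / real (card (blockA n' \<times> blockA n''))) *
             (\<Sum>(i,j)\<in>{(i,j). i \<in> blockA n' \<and> j \<in> blockA n'' \<and> i \<noteq> j \<and>
                             \<bar>c i \<omega> - c j \<omega>\<bar> < \<delta>}.
                 - ln \<bar>c i \<omega> - c j \<omega>\<bar>) < \<epsilon>"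
      proof (intro exI conjI)
        show "0 < dlt e" by (rule dlt_pos[OF e])
        show "\<forall>\<^sub>F n in sequentially.
           \<forall>n'\<in>scales n. \<forall>n''\<in>scales n.
             (1 / real (card (blockA n' \<times> blockA n''))) *
             (\<Sum>(i,j)\<in>{(i,j). i \<in> blockA n' \<and> j \<in> blockA n'' \<and> i \<noteq> j \<and>
                             \<bar>c i \<omega> - c j \<omega>\<bar> < dlt e}.
                 - ln \<bar>c i \<omega> - c j \<omega>\<bar>) < \<epsilon>"
          unfolding eventually_sequentially
        proof (intro exI allI impI ballI)
          fix n n' n'' assume n: "max 2 (2^K0) \<le> n" and n': "n' \<in> scales n" and n'': "n'' \<in> scales n"
          have "(1 / real (card (blockA n' \<times> blockA n''))) *
             (\<Sum>(i,j)\<in>{(i,j). i \<in> blockA n' \<and> j \<in> blockA n'' \<and> i \<noteq> j \<and>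
                             \<bar>c i \<omega> - c j \<omega>\<bar> < dlt e}.
                 - ln \<bar>c i \<omega> - c j \<omega>\<bar>) < e"
            by (rule det_bound[OF w e K0 _ _ n' n'']) (use n in auto)
          then show "(1 / real (card (blockA n' \<times> blockA n''))) *
             (\<Sum>(i,j)\<in>{(i,j). i \<in> blockA n' \<and> j \<in> blockA n'' \<and> i \<noteq> j \<and>
                             \<bar>c i \<omega> - c j \<omega>\<bar> < dlt e}.
                 - ln \<bar>c i \<omega> - c j \<omega>\<bar>) < \<epsilon>"
            using m unfolding e_def by linarith
        qed
      qed
    qed
  qed
qed


end

theorem lemma2p3:
  fixes M :: "'a measure" and c :: "nat \<Rightarrow> 'a \<Rightarrow> real"
    and f :: "real \<Rightarrow> real" and B :: real and lam :: real
    and l :: "nat \<Rightarrow> real"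
  assumes "prob_space M"
    and "prob_space.indep_vars M (\<lambda>_. borel) c {1..}"
    and "\<And>k. k \<ge> 1 \<Longrightarrow> distributed M lborel (c k) (\<lambda>x. ennreal (f x))"
    and "f \<in> borel_measurable lborel"
    and "\<And>x. 0 \<le> f x" and "\<And>x. f x \<le> B"
    and "\<And>x. x \<notin> {0..1} \<Longrightarrow> f x = 0"
    and "AE x in lborel. x \<in> {0..1} \<longrightarrow> f x > 0"
    and "lam > 0" and "\<And>k. l k = exp (- lam * real k)"
  shows "AE \<omega> in M. \<forall>\<epsilon>>0. \<exists>\<delta>>0. \<forall>\<^sub>F n in sequentially.
           \<forall>n'\<in>scales n. \<forall>n''\<in>scales n.
             (1 / real (card (blockA n' \<times> blockA n''))) *
             (\<Sum>(i,j)\<in>{(i,j). i \<in> blockA n' \<and> j \<in> blockA n'' \<and> i \<noteq> j \<and>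
                             \<bar>c i \<omega> - c j \<omega>\<bar> < \<delta>}.
                 - ln \<bar>c i \<omega> - c j \<omega>\<bar>) < \<epsilon>"
proof -
  interpret L: Lset M c f "max B 1"
  proof (rule Lset.intro[OF assms(1)], rule Lset_axioms.intro)
    show "prob_space.indep_vars M (\<lambda>_. borel) c {1..}" by (rule assms(2))
    show "\<And>k. k \<ge> 1 \<Longrightarrow> distributed M lborel (c k) (\<lambda>x. ennreal (f x))" by (rule assms(3))
    show "f \<in> borel_measurable lborel" by (rule assms(4))
    show "\<And>x. 0 \<le> f x" by (rule assms(5))
    show "\<And>x. f x \<le> max B 1" using assms(6) by (simp add: le_max_iff_disj)
    show "0 < max B 1" by simp
  qed
  show ?thesis by (rule L.main)
qed

end
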